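(* Let $\mathcal{G}_1$ be a two-terminal series-parallel graph with source $s_1$ and sink $t_1$, and $\mathcal{G}_2$ one with source $s_2$ and sink $t_2$. For a TTSP graph $\mathcal{G}$ with source $s$ and sink $t$, define $$\big(\mathcal{H}_2^{\mathcal{G}}\big)^2=-\tfrac12\mathrm{Tr}\big[e_t^T A^{-1}e_t\big],$$ where $A=-L_D$ and $L_D$ is the Dirichlet Laplacian of $\mathcal{G}$ grounded at $s$. Then $$\big(\mathcal{H}_2^{\mathcal{G}_1\odot\mathcal{G}_2}\big)^2=\big(\mathcal{H}_2^{\mathcal{G}_1}\big)^2+\big(\mathcal{H}_2^{\mathcal{G}_2}\big)^2,\qquad \big(\mathcal{H}_2^{\mathcal{G}_1\oslash\mathcal{G}_2}\big)^2=\big(\mathcal{H}_2^{\mathcal{G}_1}\big)^2:\big(\mathcal{H}_2^{\mathcal{G}_2}\big)^2.$$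
   Context: Graphs are undirected with positive edge weights (conductances); multiple edges are allowed. Two-terminal series-parallel (TTSP) graphs are defined recursively. A single edge with designated source and sink (a 1-path) is TTSP. If $\mathcal{G}_1,\mathcal{G}_2$ are TTSP with sources $s_1,s_2$ and sinks $t_1,t_2$, then: - the series join $\mathcal{G}_1\odot\mathcal{G}_2$ identifies $t_1$ with $s_2$ and has source $s_1$, sink $t_2$; it is TTSP; - the parallel join $\mathcal{G}_1\oslash\mathcal{G}_2$ identifies $s_1$ with $s_2$ (the source) and $t_1$ with $t_2$ (the sink); it is TTSP. The Dirichlet Laplacian grounded at $s$ is the weighted graph Laplacian with the row and column of $s$ deleted. Thus $\big(\mathcal{H}_2^{\mathcal{G}}\big)^2$ is the squared $\mathcal{H}_2$ norm of the single-leader consensus system $\dot x=Ax+e_tu$, $y=x$, with the source as grounded leader and the sink as input node. For $a,b>0$, the parallel sum is $a:b=\frac{ab}{a+b}=(a^{-1}+b^{-1})^{-1}$. *)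

theory Defs
  imports "Jordan_Normal_Form.Gauss_Jordan_Elimination"
begin

text \<open>Weighted multigraphs: a finite vertex set of naturals and a list of weighted
  undirected edges (u, v, w) with conductance w (parallel edges allowed).\<close>

type_synonym wedge = "nat \<times> nat \<times> real"

text \<open>Joins are realised on concrete vertex labels: the two
  graphs share exactly the identified terminals.\<close>

inductive ttsp :: "nat set \<Rightarrow> wedge list \<Rightarrow> nat \<Rightarrow> nat \<Rightarrow> bool" where
  edge: "s \<noteq> t \<Longrightarrow> w > 0 \<Longrightarrow> ttsp {s, t} [(s, t, w)] s t"
| series: "ttsp V1 E1 s1 t1 \<Longrightarrow> ttsp V2 E2 t1 t2 \<Longrightarrow> V1 \<inter> V2 = {t1}
      \<Longrightarrow> ttsp (V1 \<union> V2) (E1 @ E2) s1 t2"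
| parallel: "ttsp V1 E1 s t \<Longrightarrow> ttsp V2 E2 s t \<Longrightarrow> V1 \<inter> V2 = {s, t}
      \<Longrightarrow> ttsp (V1 \<union> V2) (E1 @ E2) s t"

definition laplacian :: "wedge list \<Rightarrow> nat \<Rightarrow> nat \<Rightarrow> real" where
  "laplacian E u v =
     (if u = v then (\<Sum>(a, b, w)\<leftarrow>E. if (a = u \<or> b = u) \<and> a \<noteq> b then w else 0)
      else - (\<Sum>(a, b, w)\<leftarrow>E. if (a = u \<and> b = v) \<or> (a = v \<and> b = u) then w else 0))"

definition grounded_verts :: "nat set \<Rightarrow> nat \<Rightarrow> nat list" where
  "grounded_verts V s = sorted_list_of_set (V - {s})"

definition dirichlet_laplacian :: "nat set \<Rightarrow> wedge list \<Rightarrow> nat \<Rightarrow> real mat" where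
  "dirichlet_laplacian V E s =
     (let xs = grounded_verts V s
      in mat (length xs) (length xs) (\<lambda>(i, j). laplacian E (xs ! i) (xs ! j)))"

text \<open>(H_2^G)^2 = -1/2 Tr[e_t^T A^{-1} e_t] with A = - L_D (the trace of a 1x1 matrix
  is its entry). The index of t in the sorted list of non-source vertices is the
  number of non-source vertices below t.\<close>

definition H2sq :: "nat set \<Rightarrow> wedge list \<Rightarrow> nat \<Rightarrow> nat \<Rightarrow> real" where
  "H2sq V E s t =
     (let xs = grounded_verts V s;
          A = - dirichlet_laplacian V E s;
          e = unit_vec (length xs) (card {v \<in> V - {s}. v < t})
      in - (1/2) * (e \<bullet> (the (mat_inverse A) *\<^sub>v e)))"

definition par_sum :: "real \<Rightarrow> real \<Rightarrow> real" where
  "par_sum a b = a * b / (a + b)"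

end

theory Submission
  imports Defs "Jordan_Normal_Form.Determinant"
begin


definition net1 :: "(nat \<Rightarrow> real) \<Rightarrow> nat \<Rightarrow> wedge \<Rightarrow> real" where
  "net1 f u e = (case e of (a, b, w) \<Rightarrow>
     (if a = b then 0 else if a = u then w * (f a - f b) else if b = u then w * (f b - f a) else 0))"

definition net :: "wedge list \<Rightarrow> (nat \<Rightarrow> real) \<Rightarrow> nat \<Rightarrow> real" where
  "net E f u = sum_list (map (net1 f u) E)"

lemma net_Nil[simp]: "net [] f u = 0" by (simp add: net_def)
lemma net_Cons[simp]: "net (e # E) f u = net1 f u e + net E f u" by (simp add: net_def)
lemma net_append[simp]: "net (E1 @ E2) f u = net E1 f u + net E2 f u" by (simp add: net_def)

definition lap1 :: "wedge \<Rightarrow> nat \<Rightarrow> nat \<Rightarrow> real" where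
  "lap1 e u v = (case e of (a, b, w) \<Rightarrow>
     (if u = v then (if (a = u \<or> b = u) \<and> a \<noteq> b then w else 0)
      else - (if (a = u \<and> b = v) \<or> (a = v \<and> b = u) then w else 0)))"

lemma laplacian_Nil[simp]: "laplacian [] u v = 0" by (simp add: laplacian_def)
lemma laplacian_Cons[simp]: "laplacian (e # E) u v = lap1 e u v + laplacian E u v"
  by (cases e) (simp add: laplacian_def lap1_def)

definition edges_in :: "nat set \<Rightarrow> wedge list \<Rightarrow> bool" where
  "edges_in V E = (\<forall>(a, b, w) \<in> set E. a \<in> V \<and> b \<in> V)"

lemma lap1_sum:
  assumes "finite V" "u \<in> V" "a \<in> V" "b \<in> V"
  shows "(\<Sum>v\<in>V. lap1 (a, b, w) u v * f v) = net1 f u (a, b, w)"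
proof -
  have "\<forall>v. lap1 (a, b, w) u v * f v =
     (if a \<noteq> b \<and> a = u then (if v = u then w * f u else 0) + (if v = b then - (w * f b) else 0)
      else if a \<noteq> b \<and> b = u then (if v = u then w * f u else 0) + (if v = a then - (w * f a) else 0)
      else 0)"
    by (auto simp: lap1_def)
  then have "(\<Sum>v\<in>V. lap1 (a, b, w) u v * f v) = (\<Sum>v\<in>V. 
     (if a \<noteq> b \<and> a = u then (if v = u then w * f u else 0) + (if v = b then - (w * f b) else 0)
      else if a \<noteq> b \<and> b = u then (if v = u then w * f u else 0) + (if v = a then - (w * f a) else 0)
      else 0))" by simp
  also have "\<dots> = net1 f u (a, b, w)"
    using assms by (auto simp: net1_def sum.distrib algebra_simps)
  finally show ?thesis .
qed

lemma lap_sum: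
  assumes "finite V" "u \<in> V" "edges_in V E"
  shows "(\<Sum>v\<in>V. laplacian E u v * f v) = net E f u"
  using assms(3)
proof (induction E)
  case Nil then show ?case by simp
next
  case (Cons e E)
  obtain a b w where e: "e = (a, b, w)" by (cases e)
  have ab: "a \<in> V" "b \<in> V" "edges_in V E" using Cons.prems e by (auto simp: edges_in_def)
  have "(\<Sum>v\<in>V. laplacian (e # E) u v * f v) = (\<Sum>v\<in>V. lap1 e u v * f v) + (\<Sum>v\<in>V. laplacian E u v * f v)"
    by (simp add: sum.distrib distrib_right)
  then show ?case using lap1_sum[OF assms(1,2) ab(1,2)] Cons.IH[OF ab(3)] e by simp
qed

lemma net1_energy:
  assumes "finite V" "a \<in> V" "b \<in> V"
  shows "(\<Sum>u\<in>V. f u * net1 f u (a, b, w)) = (if a = b then 0 else w * (f a - f b)^2)"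
proof -
  have "\<forall>u. f u * net1 f u (a, b, w) = (if a = b then 0 else
     (if u = a then f a * (w * (f a - f b)) else 0) + (if u = b then f b * (w * (f b - f a)) else 0))"
    by (auto simp: net1_def)
  then have "(\<Sum>u\<in>V. f u * net1 f u (a, b, w)) = (\<Sum>u\<in>V. (if a = b then 0 else
     (if u = a then f a * (w * (f a - f b)) else 0) + (if u = b then f b * (w * (f b - f a)) else 0)))"
    by simp
  also have "\<dots> = (if a = b then 0 else w * (f a - f b)^2)"
    using assms by (auto simp: sum.distrib power2_eq_square algebra_simps)
  finally show ?thesis .
qed

definition energy :: "wedge list \<Rightarrow> (nat \<Rightarrow> real) \<Rightarrow> real" where
  "energy E f = sum_list (map (\<lambda>(a, b, w). if a = b then 0 else w * (f a - f b)^2) E)"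

lemma net_energy:
  assumes "finite V" "edges_in V E"
  shows "(\<Sum>u\<in>V. f u * net E f u) = energy E f"
  using assms(2)
proof (induction E)
  case Nil then show ?case by (simp add: energy_def)
next
  case (Cons e E)
  obtain a b w where e: "e = (a, b, w)" by (cases e)
  have ab: "a \<in> V" "b \<in> V" "edges_in V E" using Cons.prems e by (auto simp: edges_in_def)
  have "(\<Sum>u\<in>V. f u * net (e # E) f u) = (\<Sum>u\<in>V. f u * net1 f u e) + (\<Sum>u\<in>V. f u * net E f u)"
    by (simp add: sum.distrib distrib_left)
  then show ?case using net1_energy[OF assms(1) ab(1,2)] Cons.IH[OF ab(3)] e by (simp add: energy_def)
qed

lemma energy_zero:
  assumes "\<forall>(a, b, w) \<in> set E. w > 0" "energy E f = 0"
  shows "\<forall>(a, b, w) \<in> set E. f a = f b"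
  using assms
proof (induction E)
  case Nil then show ?case by simp
next
  case (Cons e E)
  obtain a b w where e: "e = (a, b, w)" by (cases e)
  have w: "w > 0" using Cons.prems e by auto
  have n1: "0 \<le> (if a = b then 0 else w * (f a - f b)^2)" using w by auto
  have n2: "0 \<le> energy E f" unfolding energy_def
    using Cons.prems(1) by (intro sum_list_nonneg) auto
  have eq: "energy (e # E) f = (if a = b then 0 else w * (f a - f b)^2) + energy E f"
    using e by (simp add: energy_def)
  have "(if a = b then 0 else w * (f a - f b)^2) = 0" "energy E f = 0"
    using n1 n2 eq Cons.prems(2) by linarith+
  then have "f a = f b" using w by (auto split: if_splits)
  then show ?case using Cons \<open>energy E f = 0\<close> e by auto
qed



lemma ttsp_basic0:
  assumes "ttsp V E s t"
  shows "finite V \<and> s \<in> V \<and> t \<in> V \<and> s \<noteq> t \<and> edges_in V E \<and> (\<forall>(a, b, w) \<in> set E. w > 0)"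
  using assms
proof (induction rule: ttsp.induct)
  case (edge s t w)
  then show ?case by (auto simp: edges_in_def)
next
  case (series V1 E1 s1 t1 V2 E2 t2)
  have "s1 \<noteq> t2" using series by blast
  then show ?case using series by (auto simp: edges_in_def)
next
  case (parallel V1 E1 s t V2 E2)
  then show ?case by (auto simp: edges_in_def)
qed

lemma ttsp_basic:
  assumes "ttsp V E s t"
  shows "finite V" "s \<in> V" "t \<in> V" "s \<noteq> t" "edges_in V E" "\<forall>(a, b, w) \<in> set E. w > 0"
  using ttsp_basic0[OF assms] by simp_all

lemma ttsp_conn:
  assumes "ttsp V E s t" "\<forall>(a, b, w) \<in> set E. f a = f b" "v \<in> V"
  shows "f v = f s"
  using assms
proof (induction arbitrary: v rule: ttsp.induct)
  case (edge s t w)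
  then show ?case by auto
next
  case (series V1 E1 s1 t1 V2 E2 t2)
  have h1: "\<forall>(a, b, w) \<in> set E1. f a = f b" and h2: "\<forall>(a, b, w) \<in> set E2. f a = f b"
    using series.prems(1) by auto
  have t1: "t1 \<in> V1" using ttsp_basic[OF series.hyps(1)] by simp
  show ?case
  proof (cases "v \<in> V1")
    case True then show ?thesis using series.IH(1)[OF h1] by simp
  next
    case False then have "v \<in> V2" using series.prems(2) by simp
    then show ?thesis using series.IH(2)[OF h2] series.IH(1)[OF h1 t1] by simp
  qed
next
  case (parallel V1 E1 s t V2 E2)
  have h1: "\<forall>(a, b, w) \<in> set E1. f a = f b" and h2: "\<forall>(a, b, w) \<in> set E2. f a = f b"
    using parallel.prems(1) by auto
  show ?case
  proof (cases "v \<in> V1")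
    case True then show ?thesis using parallel.IH(1)[OF h1] by simp
  next
    case False then have "v \<in> V2" using parallel.prems(2) by simp
    then show ?thesis using parallel.IH(2)[OF h2] by simp
  qed
qed

definition pot :: "nat set \<Rightarrow> wedge list \<Rightarrow> nat \<Rightarrow> nat \<Rightarrow> (nat \<Rightarrow> real) \<Rightarrow> real \<Rightarrow> bool" where
  "pot V E s t \<phi> R \<longleftrightarrow> R > 0 \<and> \<phi> s = 0 \<and> \<phi> t = R \<and>
     (\<forall>u\<in>V. net E \<phi> u = (if u = t then 1 else if u = s then -1 else 0))"

lemma net_cong:
  assumes "edges_in V E" "\<forall>v\<in>V. f v = g v"
  shows "net E f u = net E g u"
  using assms
proof (induction E)
  case Nil then show ?case by simp
next
  case (Cons e E)
  obtain a b w where e: "e = (a, b, w)" by (cases e)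
  have "net1 f u e = net1 g u e" using Cons.prems e by (auto simp: edges_in_def net1_def)
  then show ?case using Cons by (simp add: edges_in_def)
qed

lemma net_outside:
  assumes "edges_in V E" "u \<notin> V"
  shows "net E f u = 0"
  using assms
proof (induction E)
  case Nil then show ?case by simp
next
  case (Cons e E)
  obtain a b w where e: "e = (a, b, w)" by (cases e)
  have "net1 f u e = 0" using Cons.prems e by (auto simp: edges_in_def net1_def)
  then show ?case using Cons by (simp add: edges_in_def)
qed

lemma net_shift: "net E (\<lambda>v. c + f v) u = net E f u"
  by (induction E) (auto simp: net1_def)

lemma net_scale: "net E (\<lambda>v. c * f v) u = c * net E f u"
  by (induction E) (auto simp: net1_def algebra_simps)

lemma pot_edge: "s \<noteq> t \<Longrightarrow> w > 0 \<Longrightarrow> pot {s, t} [(s, t, w)] s t (\<lambda>v. if v = t then 1 / w else 0) (1 / w)"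
  by (auto simp: pot_def net1_def)

lemma pot_series:
  assumes G1: "ttsp V1 E1 s1 t1" and G2: "ttsp V2 E2 t1 t2" and I: "V1 \<inter> V2 = {t1}"
    and P1: "pot V1 E1 s1 t1 \<phi>1 R1" and P2: "pot V2 E2 t1 t2 \<phi>2 R2"
  shows "pot (V1 \<union> V2) (E1 @ E2) s1 t2 (\<lambda>v. if v \<in> V1 then \<phi>1 v else R1 + \<phi>2 v) (R1 + R2)"
proof -
  note S1 = ttsp_basic[OF G1] and S2 = ttsp_basic[OF G2]
  let ?\<phi> = "\<lambda>v. if v \<in> V1 then \<phi>1 v else R1 + \<phi>2 v"
  have e1: "net E1 ?\<phi> u = net E1 \<phi>1 u" for u using S1 net_cong[of V1 E1 ?\<phi> \<phi>1 u] by auto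
  have "\<forall>v\<in>V2. ?\<phi> v = R1 + \<phi>2 v"
  proof
    fix v assume v: "v \<in> V2"
    show "?\<phi> v = R1 + \<phi>2 v"
    proof (cases "v \<in> V1")
      case True then have "v = t1" using I v by auto
      then show ?thesis using P1 P2 by (simp add: pot_def)
    qed simp
  qed
  then have "net E2 ?\<phi> u = net E2 (\<lambda>v. R1 + \<phi>2 v) u" for u
    using S2 net_cong[of V2 E2 ?\<phi> "\<lambda>v. R1 + \<phi>2 v" u] by blast
  then have e2: "net E2 ?\<phi> u = net E2 \<phi>2 u" for u by (simp add: net_shift)
  have t2: "t2 \<notin> V1" using I S2 by auto
  have s1: "s1 \<notin> V2" using I S1 by auto
  show ?thesis
    unfolding pot_def
  proof (intro conjI ballI)
    show "R1 + R2 > 0" using P1 P2 by (simp add: pot_def)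
    show "?\<phi> s1 = 0" using P1 S1 by (simp add: pot_def)
    show "?\<phi> t2 = R1 + R2" using P2 t2 by (simp add: pot_def)
    fix u assume u: "u \<in> V1 \<union> V2"
    show "net (E1 @ E2) ?\<phi> u = (if u = t2 then 1 else if u = s1 then -1 else 0)"
    proof (cases "u \<in> V1")
      case True
      show ?thesis
      proof (cases "u = t1")
        case True then show ?thesis using P1 P2 S1 S2 e1 e2 t2 by (auto simp: pot_def)
      next
        case False
        then have "u \<notin> V2" using I \<open>u \<in> V1\<close> by auto
        then show ?thesis using net_outside[of V2 E2 u] P1 S1 S2 e1 e2 t2 True False by (auto simp: pot_def)
      qed
    next
      case False
      then have "u \<in> V2" using u by auto
      then show ?thesis using net_outside[of V1 E1 u] P2 S1 S2 e1 e2 s1 False by (auto simp: pot_def)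
    qed
  qed
qed



lemma pot_parallel:
  assumes G1: "ttsp V1 E1 s t" and G2: "ttsp V2 E2 s t" and I: "V1 \<inter> V2 = {s, t}"
    and P1: "pot V1 E1 s t \<phi>1 R1" and P2: "pot V2 E2 s t \<phi>2 R2"
  shows "pot (V1 \<union> V2) (E1 @ E2) s t
     (\<lambda>v. if v \<in> V1 then (R2 / (R1 + R2)) * \<phi>1 v else (R1 / (R1 + R2)) * \<phi>2 v) (R1 * R2 / (R1 + R2))"
proof -
  note S1 = ttsp_basic[OF G1] and S2 = ttsp_basic[OF G2]
  define \<alpha> where "\<alpha> = R2 / (R1 + R2)"
  define \<beta> where "\<beta> = R1 / (R1 + R2)"
  have R: "R1 > 0" "R2 > 0" using P1 P2 by (auto simp: pot_def)
  have R12: "R1 + R2 \<noteq> 0" using R by simp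
  have ab1: "\<alpha> + \<beta> = 1" unfolding \<alpha>_def \<beta>_def using R12 by (simp add: add_divide_distrib[symmetric])
  have ab2: "\<alpha> * R1 = R1 * R2 / (R1 + R2)" "\<beta> * R2 = R1 * R2 / (R1 + R2)"
    unfolding \<alpha>_def \<beta>_def by simp_all
  note ab = ab1 ab2
  let ?\<phi> = "\<lambda>v. if v \<in> V1 then \<alpha> * \<phi>1 v else \<beta> * \<phi>2 v"
  have "net E1 ?\<phi> u = net E1 (\<lambda>v. \<alpha> * \<phi>1 v) u" for u
    using S1 net_cong[of V1 E1 ?\<phi> "\<lambda>v. \<alpha> * \<phi>1 v" u] by auto
  then have e1: "net E1 ?\<phi> u = \<alpha> * net E1 \<phi>1 u" for u by (simp add: net_scale)
  have "\<forall>v\<in>V2. ?\<phi> v = \<beta> * \<phi>2 v"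
  proof
    fix v assume v: "v \<in> V2"
    show "?\<phi> v = \<beta> * \<phi>2 v"
    proof (cases "v \<in> V1")
      case True then have "v = s \<or> v = t" using I v by auto
      then show ?thesis using P1 P2 ab by (auto simp: pot_def)
    qed simp
  qed
  then have "net E2 ?\<phi> u = net E2 (\<lambda>v. \<beta> * \<phi>2 v) u" for u
    using S2 net_cong[of V2 E2 ?\<phi> "\<lambda>v. \<beta> * \<phi>2 v" u] by blast
  then have e2: "net E2 ?\<phi> u = \<beta> * net E2 \<phi>2 u" for u by (simp add: net_scale)
  show ?thesis
    unfolding pot_def \<alpha>_def[symmetric] \<beta>_def[symmetric]
  proof (intro conjI ballI)
    show "R1 * R2 / (R1 + R2) > 0" using R by simp
    show "?\<phi> s = 0" using P1 S1 by (simp add: pot_def)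
    show "?\<phi> t = R1 * R2 / (R1 + R2)" using P1 S1 ab by (simp add: pot_def)
    fix u assume u: "u \<in> V1 \<union> V2"
    have "net (E1 @ E2) ?\<phi> u = \<alpha> * net E1 \<phi>1 u + \<beta> * net E2 \<phi>2 u" using e1 e2 by simp
    also have "\<dots> = (if u = t then 1 else if u = s then -1 else 0)"
    proof (cases "u \<in> V1 \<inter> V2")
      case True
      have n1: "net E1 \<phi>1 u = (if u = t then 1 else if u = s then -1 else 0)"
        using P1 True unfolding pot_def by blast
      have n2: "net E2 \<phi>2 u = (if u = t then 1 else if u = s then -1 else 0)"
        using P2 True unfolding pot_def by blast
      have "u = s \<or> u = t" using True I by blast
      then show ?thesis using n1 n2 ab1 S1(4) by (auto simp: algebra_simps)
    next
      case False
      show ?thesis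
      proof (cases "u \<in> V1")
        case True
        then have "u \<notin> V2" "u \<noteq> s" "u \<noteq> t" using False I by auto
        moreover have "net E1 \<phi>1 u = (if u = t then 1 else if u = s then -1 else 0)"
          using P1 True unfolding pot_def by blast
        ultimately show ?thesis using net_outside[of V2 E2 u \<phi>2] S2(5) by simp
      next
        case F: False
        then have "u \<in> V2" "u \<noteq> s" "u \<noteq> t" using u I S1 by auto
        moreover have "net E2 \<phi>2 u = (if u = t then 1 else if u = s then -1 else 0)"
          using P2 \<open>u \<in> V2\<close> unfolding pot_def by blast
        ultimately show ?thesis using net_outside[of V1 E1 u \<phi>1] S1(5) F by simp
      qed
    qed
    finally show "net (E1 @ E2) ?\<phi> u = (if u = t then 1 else if u = s then -1 else 0)" .
  qed
qed

lemma ttsp_pot: "ttsp V E s t \<Longrightarrow> \<exists>\<phi> R. pot V E s t \<phi> R"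
proof (induction rule: ttsp.induct)
  case (edge s t w) then show ?case using pot_edge by blast
next
  case (series V1 E1 s1 t1 V2 E2 t2) then show ?case using pot_series by blast
next
  case (parallel V1 E1 s t V2 E2) then show ?case using pot_parallel by blast
qed



lemma sorted_idx:
  fixes S :: "nat set"
  assumes "finite S" "t \<in> S"
  defines "xs \<equiv> sorted_list_of_set S"
  shows "card {v \<in> S. v < t} < length xs \<and> xs ! card {v \<in> S. v < t} = t"
proof -
  have set: "set xs = S" and dist: "distinct xs" and sw: "sorted_wrt (<) xs"
    using assms by (simp_all add: xs_def strict_sorted_list_of_set)
  obtain k where k: "k < length xs" "xs ! k = t" using assms(2) set by (metis in_set_conv_nth)
  have "{v \<in> S. v < t} = (!) xs ` {..<k}"
  proof
    show "{v \<in> S. v < t} \<subseteq> (!) xs ` {..<k}"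
    proof
      fix v assume v: "v \<in> {v \<in> S. v < t}"
      then obtain j where j: "j < length xs" "xs ! j = v" using set by (metis (no_types, lifting) in_set_conv_nth mem_Collect_eq)
      have "j < k"
      proof (rule ccontr)
        assume "\<not> j < k"
        then have "j = k \<or> k < j" by auto
        then have "xs ! k \<le> xs ! j" using sorted_wrt_nth_less[OF sw _ j(1), of k] by auto
        then show False using v j k by auto
      qed
      then show "v \<in> (!) xs ` {..<k}" using j by auto
    qed
    show "(!) xs ` {..<k} \<subseteq> {v \<in> S. v < t}"
      using sorted_wrt_nth_less[OF sw _ k(1)] k set nth_mem by fastforce
  qed
  moreover have "card ((!) xs ` {..<k}) = k"
    using inj_on_nth[OF dist, of "{..<k}"] k by (simp add: card_image)
  ultimately show ?thesis using k by simp
qed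

locale grounded =
  fixes V E s t
  assumes G: "ttsp V E s t"
begin

definition "xs = grounded_verts V s"
definition "n = length xs"
definition "D = dirichlet_laplacian V E s"
definition "k = card {v \<in> V - {s}. v < t}"

lemma fin: "finite V" using ttsp_basic[OF G] by simp
lemma set_xs: "set xs = V - {s}" using fin by (simp add: xs_def grounded_verts_def)
lemma dist_xs: "distinct xs" by (simp add: xs_def grounded_verts_def)
lemma D_carrier: "D \<in> carrier_mat n n" by (simp add: D_def dirichlet_laplacian_def n_def xs_def Let_def)
lemma D_index: "i < n \<Longrightarrow> j < n \<Longrightarrow> D $$ (i, j) = laplacian E (xs ! i) (xs ! j)"
  by (simp add: D_def dirichlet_laplacian_def n_def xs_def Let_def)

lemma k: "k < n" "xs ! k = t"
  using sorted_idx[of "V - {s}" t] ttsp_basic[OF G] fin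
  unfolding k_def n_def xs_def grounded_verts_def by auto

lemma D_mult:
  assumes fs: "f s = 0" and i: "i < n"
  shows "(D *\<^sub>v vec n (\<lambda>j. f (xs ! j))) $ i = net E f (xs ! i)"
proof -
  have "(D *\<^sub>v vec n (\<lambda>j. f (xs ! j))) $ i = (\<Sum>j\<in>{0..<n}. laplacian E (xs ! i) (xs ! j) * f (xs ! j))"
    using D_carrier i by (auto simp: scalar_prod_def D_index intro!: sum.cong)
  also have "\<dots> = (\<Sum>v\<in>set xs. laplacian E (xs ! i) v * f v)"
  proof -
    have "set xs = (!) xs ` {0..<n}" by (auto simp: n_def in_set_conv_nth)
    moreover have "inj_on ((!) xs) {0..<n}" using inj_on_nth[OF dist_xs] by (simp add: n_def)
    ultimately show ?thesis by (simp add: sum.reindex)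
  qed
  also have "\<dots> = (\<Sum>v\<in>V. laplacian E (xs ! i) v * f v)"
    using fin set_xs fs ttsp_basic[OF G] by (simp add: sum.remove[of V s])
  also have "\<dots> = net E f (xs ! i)"
    using lap_sum[OF fin _ ttsp_basic(5)[OF G]] i set_xs nth_mem[of i xs] by (simp add: n_def)
  finally show ?thesis .
qed

lemma D_inj:
  assumes v: "v \<in> carrier_vec n" and Dv: "D *\<^sub>v v = 0\<^sub>v n"
  shows "v = 0\<^sub>v n"
proof -
  define f where "f u = (if u \<in> set xs then v $ (the_inv_into {0..<n} ((!) xs) u) else 0)" for u
  have inj: "inj_on ((!) xs) {0..<n}" using inj_on_nth[OF dist_xs] by (simp add: n_def)
  have fx: "f (xs ! j) = v $ j" if "j < n" for j
    using that the_inv_into_f_f[OF inj, of j] by (simp add: f_def n_def)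
  have vv: "vec n (\<lambda>j. f (xs ! j)) = v" using v fx by (intro eq_vecI) auto
  have fs: "f s = 0" using set_xs by (simp add: f_def)
  have netz: "net E f u = 0" if "u \<in> V - {s}" for u
  proof -
    have "u \<in> set xs" using that set_xs by simp
    then obtain i where i: "i < n" "xs ! i = u" by (auto simp: in_set_conv_nth n_def)
    have "net E f u = (D *\<^sub>v v) $ i" using D_mult[of f i, OF fs i(1)] vv i by simp
    then show ?thesis using Dv i by simp
  qed
  have "(\<Sum>u\<in>V. f u * net E f u) = 0"
    by (rule sum.neutral) (use fs netz in auto)
  then have "energy E f = 0" using net_energy[OF fin ttsp_basic(5)[OF G]] by simp
  then have eqs: "\<forall>(a, b, w) \<in> set E. f a = f b" by (rule energy_zero[OF ttsp_basic(6)[OF G]])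
  have "f u = 0" if "u \<in> V" for u using ttsp_conn[OF G eqs that] fs by simp
  then have "\<forall>u\<in>V. f u = 0" by blast
  then have "f (xs ! j) = 0" if "j < n" for j using that set_xs nth_mem[of j xs] by (auto simp: n_def)
  then show ?thesis using vv v by (intro eq_vecI) (auto simp: fx)
qed

lemma inverse_exists: "\<exists>B. mat_inverse (- D) = Some B \<and> B * (- D) = 1\<^sub>m n \<and> B \<in> carrier_mat n n"
proof -
  have A: "- D \<in> carrier_mat n n" using D_carrier by simp
  have "det (- D) \<noteq> 0"
  proof
    assume "det (- D) = 0"
    then obtain v where v: "v \<in> carrier_vec n" "v \<noteq> 0\<^sub>v n" "(- D) *\<^sub>v v = 0\<^sub>v n"
      using det_0_iff_vec_prod_zero[OF A] by blast
    have dv: "dim_vec v = dim_col D" using v(1) D_carrier by simp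
    have "D *\<^sub>v v = 0\<^sub>v n"
    proof (rule eq_vecI)
      fix i assume i: "i < dim_vec (0\<^sub>v n)"
      have "((- D) *\<^sub>v v) $ i = 0" using v(3) i by simp
      moreover have "((- D) *\<^sub>v v) $ i = - ((D *\<^sub>v v) $ i)"
        using uminus_mult_mat_vec[OF dv] i D_carrier by simp
      ultimately show "(D *\<^sub>v v) $ i = 0\<^sub>v n $ i" using i by simp
    qed (use D_carrier in simp)
    then show False using D_inj v by blast
  qed
  then have "- D \<in> Units (ring_mat TYPE(real) n undefined)" by (rule det_non_zero_imp_unit[OF A])
  then obtain B where "mat_inverse (- D) = Some B" using mat_inverse(1)[OF A] by fastforce
  then show ?thesis using mat_inverse(2)[OF A] by blast
qed

lemma H2sq_pot:
  assumes P: "pot V E s t \<phi> R"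
  shows "H2sq V E s t = R / 2"
proof -
  obtain B where B: "mat_inverse (- D) = Some B" "B * (- D) = 1\<^sub>m n" "B \<in> carrier_mat n n"
    using inverse_exists by blast
  define y where "y = vec n (\<lambda>j. - \<phi> (xs ! j))"
  have y: "y \<in> carrier_vec n" by (simp add: y_def)
  have fs: "(\<lambda>v. - \<phi> v) s = 0" using P by (simp add: pot_def)
  have Ay: "(- D) *\<^sub>v y = unit_vec n k"
  proof (intro eq_vecI)
    fix i assume i: "i < dim_vec (unit_vec n k)"
    then have i: "i < n" by simp
    have xi: "xs ! i \<in> V - {s}" using i set_xs nth_mem[of i xs] by (auto simp: n_def)
    have "(D *\<^sub>v y) $ i = net E (\<lambda>v. - \<phi> v) (xs ! i)"
      using D_mult[of "\<lambda>v. - \<phi> v" i, OF fs i] by (simp add: y_def)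
    also have "\<dots> = - net E \<phi> (xs ! i)" using net_scale[of E "-1" \<phi>] by simp
    also have "\<dots> = - (if xs ! i = t then 1 else 0)" using P xi by (auto simp: pot_def)
    also have "(xs ! i = t) = (i = k)" using k dist_xs i by (auto simp: n_def nth_eq_iff_index_eq)
    finally have "(D *\<^sub>v y) $ i = - (if i = k then 1 else 0)" .
    moreover have "(- D) *\<^sub>v y = - (D *\<^sub>v y)" using D_carrier y by simp
    ultimately show "((- D) *\<^sub>v y) $ i = unit_vec n k $ i" using i D_carrier k by simp
  qed (use D_carrier in simp)
  have mD: "- D \<in> carrier_mat n n" using D_carrier by simp
  have "B *\<^sub>v unit_vec n k = B *\<^sub>v ((- D) *\<^sub>v y)" by (simp only: Ay)
  also have "\<dots> = (B * (- D)) *\<^sub>v y" by (rule assoc_mult_mat_vec[OF B(3) mD y, symmetric])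
  also have "\<dots> = 1\<^sub>m n *\<^sub>v y" by (simp only: B(2))
  also have "\<dots> = y" using y by simp
  finally have "B *\<^sub>v unit_vec n k = y" .
  moreover have "unit_vec n k \<bullet> y = - R" using y k P by (simp add: y_def pot_def)
  ultimately have uR: "unit_vec n k \<bullet> (B *\<^sub>v unit_vec n k) = - R" by simp
  have "H2sq V E s t = - (1/2) * (unit_vec n k \<bullet> (the (mat_inverse (- D)) *\<^sub>v unit_vec n k))"
    by (simp only: H2sq_def Let_def D_def xs_def n_def k_def)
  also have "\<dots> = - (1/2) * (unit_vec n k \<bullet> (B *\<^sub>v unit_vec n k))"
    by (simp only: B(1) option.sel)
  also have "\<dots> = R / 2" by (simp only: uR)
  finally show ?thesis .
qed

end

lemma H2sq_eq: "ttsp V E s t \<Longrightarrow> pot V E s t \<phi> R \<Longrightarrow> H2sq V E s t = R / 2"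
  by (rule grounded.H2sq_pot[OF grounded.intro])



theorem theorem3:
  assumes G1: "ttsp V1 E1 s1 t1"
      and G2: "ttsp V2 E2 s2 t2"
  shows "(s2 = t1 \<and> V1 \<inter> V2 = {t1} \<longrightarrow>
           H2sq (V1 \<union> V2) (E1 @ E2) s1 t2 = H2sq V1 E1 s1 t1 + H2sq V2 E2 s2 t2) \<and>
         (s2 = s1 \<and> t2 = t1 \<and> V1 \<inter> V2 = {s1, t1} \<longrightarrow>
           H2sq (V1 \<union> V2) (E1 @ E2) s1 t1 = par_sum (H2sq V1 E1 s1 t1) (H2sq V2 E2 s2 t2))"
proof -
  obtain \<phi>1 R1 where P1: "pot V1 E1 s1 t1 \<phi>1 R1" using ttsp_pot[OF G1] by blast
  obtain \<phi>2 R2 where P2: "pot V2 E2 s2 t2 \<phi>2 R2" using ttsp_pot[OF G2] by blast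
  have h1: "H2sq V1 E1 s1 t1 = R1 / 2" by (rule H2sq_eq[OF G1 P1])
  have h2: "H2sq V2 E2 s2 t2 = R2 / 2" by (rule H2sq_eq[OF G2 P2])
  have R: "R1 > 0" "R2 > 0" using P1 P2 by (auto simp: pot_def)
  show ?thesis
  proof (intro conjI impI)
    assume a: "s2 = t1 \<and> V1 \<inter> V2 = {t1}"
    then have G2': "ttsp V2 E2 t1 t2" and P2': "pot V2 E2 t1 t2 \<phi>2 R2" using G2 P2 by auto
    have G: "ttsp (V1 \<union> V2) (E1 @ E2) s1 t2" using ttsp.series[OF G1 G2'] a by blast
    have "H2sq (V1 \<union> V2) (E1 @ E2) s1 t2 = (R1 + R2) / 2"
      by (rule H2sq_eq[OF G pot_series[OF G1 G2' _ P1 P2']]) (use a in blast)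
    then show "H2sq (V1 \<union> V2) (E1 @ E2) s1 t2 = H2sq V1 E1 s1 t1 + H2sq V2 E2 s2 t2"
      using h1 h2 by simp
  next
    assume a: "s2 = s1 \<and> t2 = t1 \<and> V1 \<inter> V2 = {s1, t1}"
    then have G2': "ttsp V2 E2 s1 t1" and P2': "pot V2 E2 s1 t1 \<phi>2 R2" using G2 P2 by auto
    have G: "ttsp (V1 \<union> V2) (E1 @ E2) s1 t1" using ttsp.parallel[OF G1 G2'] a by blast
    have c1: "H2sq (V1 \<union> V2) (E1 @ E2) s1 t1 = (R1 * R2 / (R1 + R2)) / 2"
      by (rule H2sq_eq[OF G pot_parallel[OF G1 G2' _ P1 P2']]) (use a in blast)
    have c2: "par_sum (R1 / 2) (R2 / 2) = (R1 * R2 / (R1 + R2)) / 2"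
      using R by (simp add: par_sum_def field_simps)
    show "H2sq (V1 \<union> V2) (E1 @ E2) s1 t1 = par_sum (H2sq V1 E1 s1 t1) (H2sq V2 E2 s2 t2)"
      by (simp only: h1 h2 c1 c2)
  qed
qed


end
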